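(* Let $(a,b,c)\in\mathcal{I}:=\{(a,b,c)\in[0,1]^3 : a\le b,\ c\le b\}$. Then $(a',b',c'):=\varphi(a,b,c)\in\mathcal{I}$ and $\psi(\mathcal{S}_{a,b,c})\subset\mathcal{S}_{a',b',c'}$, where $$\varphi(a,b,c):=\left(\Big(\frac{1+b}{1+2b}\Big)^d,\ \Big(\frac{1+a+ac}{1+2a}\Big)^d,\ b^d\Big(\frac{1+c+c^2}{1+b+bc}\Big)^d\right).$$
   Context: Fix an integer $d\ge2$. For a probability distribution $z=(z_i)_{i\in\mathbb{Z}}$ on $\mathbb{Z}$ set $A(z)_i=(z_{i-1}+z_i+z_{i+1})^d$ and $F(z)=A(z)/\sum_{i\in\mathbb{Z}}A(z)_i$. Let $\mathcal{E}$ be the set of probability distributions $z$ on $\mathbb{Z}$ that are symmetric ($z_i=z_{-i}$) and whose support is an interval of $\mathbb{Z}$ or all of $\mathbb{Z}$. Define $\mathsf R\colon\mathcal{E}\to[0,\infty)^{\{1,2,\dots\}}$ by $\mathsf R(z)_i=z_i/z_{i-1}$ if $z_{i-1}\neq0$ and $\mathsf R(z)_i=0$ otherwise ($i\ge1$); $\mathsf R$ is injective on $\mathcal{E}$, and $\mathcal{R}:=\mathsf R(\mathcal{E})$. $F$ maps $\mathcal{E}$ to $\mathcal{E}$, and $\psi:=\mathsf R\circ F\circ\mathsf R^{-1}\colon\mathcal{R}\to\mathcal{R}$. Explicitly, writing $\psi_n(x)=\psi(x)_n$: $\psi_1(x)=\big(\frac{1+x_1+x_1x_2}{1+2x_1}\big)^d$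 and $\psi_n(x)=x_{n-1}^d\big(\frac{1+x_n+x_nx_{n+1}}{1+x_{n-1}+x_{n-1}x_n}\big)^d$ for $n\ge2$. For reals $a,b,c$, $\mathcal{S}_{a,b,c}:=\{x\in\mathcal{R}: a\le x_1\le b,\ 0\le x_n\le c\text{ for all }n\ge2\}$. *)

theory Defs
  imports "HOL-Analysis.Analysis"
begin

definition symdist :: "(int \<Rightarrow> real) set" where
  "symdist = {z. (\<forall>i. 0 \<le> z i) \<and> (z has_sum 1) UNIV \<and> (\<forall>i. z (-i) = z i) \<and>
     (\<forall>i j k. i \<le> j \<and> j \<le> k \<and> z i \<noteq> 0 \<and> z k \<noteq> 0 \<longrightarrow> z j \<noteq> 0)}"

text \<open>The ratio map R; sequences indexed by 1,2,...; the unused index 0 is set to 0.\<close>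
definition Rmap :: "(int \<Rightarrow> real) \<Rightarrow> (nat \<Rightarrow> real)" where
  "Rmap z = (\<lambda>n. if n = 0 then 0
                  else if z (int n - 1) \<noteq> 0 then z (int n) / z (int n - 1) else 0)"

definition Amap :: "nat \<Rightarrow> (int \<Rightarrow> real) \<Rightarrow> (int \<Rightarrow> real)" where
  "Amap d z = (\<lambda>i. (z (i - 1) + z i + z (i + 1)) ^ d)"

definition Fmap :: "nat \<Rightarrow> (int \<Rightarrow> real) \<Rightarrow> (int \<Rightarrow> real)" where
  "Fmap d z = (\<lambda>i. Amap d z i / infsum (Amap d z) UNIV)"

definition Rset :: "(nat \<Rightarrow> real) set" where
  "Rset = Rmap ` symdist"

definition psi :: "nat \<Rightarrow> (nat \<Rightarrow> real) \<Rightarrow> (nat \<Rightarrow> real)" where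
  "psi d x = Rmap (Fmap d (inv_into symdist Rmap x))"

definition Sset :: "real \<Rightarrow> real \<Rightarrow> real \<Rightarrow> (nat \<Rightarrow> real) set" where
  "Sset a b c = {x \<in> Rset. a \<le> x 1 \<and> x 1 \<le> b \<and> (\<forall>n\<ge>2. 0 \<le> x n \<and> x n \<le> c)}"

definition Iset :: "(real \<times> real \<times> real) set" where
  "Iset = {(a, b, c). 0 \<le> a \<and> a \<le> 1 \<and> 0 \<le> b \<and> b \<le> 1 \<and> 0 \<le> c \<and> c \<le> 1 \<and> a \<le> b \<and> c \<le> b}"

definition phi :: "nat \<Rightarrow> real \<Rightarrow> real \<Rightarrow> real \<Rightarrow> real \<times> real \<times> real" where
  "phi d a b c = (((1 + b) / (1 + 2 * b)) ^ d,
                  ((1 + a + a * c) / (1 + 2 * a)) ^ d,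
                  b ^ d * ((1 + c + c ^ 2) / (1 + b + b * c)) ^ d)"

end

theory Submission imports Defs begin
lemma symdist_basic:
  assumes "z \<in> symdist"
  shows "z summable_on UNIV" "z 0 > 0" "\<And>i. 0 \<le> z i" "\<And>i. z i \<le> 1" "\<And>i. z (-i) = z i"
    "\<And>i j k. i \<le> j \<Longrightarrow> j \<le> k \<Longrightarrow> z i \<noteq> 0 \<Longrightarrow> z k \<noteq> 0 \<Longrightarrow> z j \<noteq> 0"
proof -
  have nn: "\<And>i. 0 \<le> z i" and hs: "(z has_sum 1) UNIV" and sy: "\<And>i. z (-i) = z i"
    and iv: "\<And>i j k. i \<le> j \<Longrightarrow> j \<le> k \<Longrightarrow> z i \<noteq> 0 \<Longrightarrow> z k \<noteq> 0 \<Longrightarrow> z j \<noteq> 0"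
    using assms unfolding symdist_def by blast+
  show "\<And>i. 0 \<le> z i" "\<And>i. z (-i) = z i" by fact+
  show "\<And>i j k. i \<le> j \<Longrightarrow> j \<le> k \<Longrightarrow> z i \<noteq> 0 \<Longrightarrow> z k \<noteq> 0 \<Longrightarrow> z j \<noteq> 0" by fact
  show sm: "z summable_on UNIV" using hs summable_on_def by blast
  have inf1: "infsum z UNIV = 1" using hs by (simp add: infsumI)
  show "z i \<le> 1" for i
  proof -
    have "infsum z {i} \<le> infsum z UNIV"
      by (rule infsum_mono_neutral) (auto simp: sm nn)
    then show ?thesis using inf1 by simp
  qed
  obtain i where zi: "z i \<noteq> 0"
  proof (rule ccontr)
    assume "\<not> thesis"
    then have "\<And>i. z i = 0" using that by blast
    then have "(z has_sum 0) UNIV" by (simp add: has_sum_0)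
    then show False using hs has_sum_unique by fastforce
  qed
  have "z (-i) \<noteq> 0" using zi sy by simp
  then have "z 0 \<noteq> 0"
    using iv[of i 0 "-i"] iv[of "-i" 0 i] zi by (cases "i \<le> 0") auto
  then show "z 0 > 0" using nn[of 0] by simp
qed

lemma F_symdist:
  assumes "z \<in> symdist" and "d \<ge> 1"
  shows "Fmap d z \<in> symdist" "infsum (Amap d z) UNIV > 0"
proof -
  note B = symdist_basic[OF assms(1)]
  define s where "s i = z (i - 1) + z i + z (i + 1)" for i
  have A: "Amap d z i = s i ^ d" for i unfolding Amap_def s_def by simp
  have s0: "0 \<le> s i" for i unfolding s_def using B(3) by (simp add: add_nonneg_nonneg)
  have s3: "s i \<le> 3" for i unfolding s_def using B(4)[of "i-1"] B(4)[of i] B(4)[of "i+1"] by simp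
  have sh1: "(\<lambda>i. z (i - 1)) summable_on UNIV"
    using summable_on_reindex_bij_betw[of "\<lambda>i::int. i - 1" UNIV UNIV z] B(1)
    by (simp add: bij_betw_def inj_on_def surj_def)
  have sh2: "(\<lambda>i. z (i + 1)) summable_on UNIV"
    using summable_on_reindex_bij_betw[of "\<lambda>i::int. i + 1" UNIV UNIV z] B(1)
    by (simp add: bij_betw_def inj_on_def surj_def)
  have ss: "s summable_on UNIV" unfolding s_def
    by (intro summable_on_add sh1 sh2 B(1))
  have "(\<lambda>i. 3 ^ (d - 1) * s i) summable_on UNIV" by (intro summable_on_cmult_right ss)
  moreover have "s i ^ d \<le> 3 ^ (d - 1) * s i" for i
  proof -
    have "s i ^ d = s i ^ (d - 1) * s i" using assms(2)
      by (metis Suc_diff_1 less_le_trans power_Suc2 zero_less_one)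
    also have "\<dots> \<le> 3 ^ (d - 1) * s i"
      by (intro mult_right_mono power_mono s0 s3)
    finally show ?thesis .
  qed
  ultimately have sA: "Amap d z summable_on UNIV"
    using summable_on_comparison_test[of "\<lambda>i. 3 ^ (d - 1) * s i" UNIV "Amap d z"]
    by (simp add: A s0)
  have A0: "Amap d z 0 > 0"
  proof -
    have "s 0 \<ge> z 0" unfolding s_def using B(3)[of "-1"] B(3)[of 1] by simp
    then have "s 0 > 0" using B(2) by simp
    then show ?thesis by (simp add: A)
  qed
  have "infsum (Amap d z) {0} \<le> infsum (Amap d z) UNIV"
    by (rule infsum_mono_neutral) (auto simp: sA A s0)
  then show Spos: "infsum (Amap d z) UNIV > 0" using A0 by simp
  define S where "S = infsum (Amap d z) UNIV"
  have F: "Fmap d z = (\<lambda>i. Amap d z i / S)" unfolding Fmap_def S_def by simp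
  have "((\<lambda>i. Amap d z i / S) has_sum (S / S)) UNIV"
    by (rule has_sum_divide_const) (use sA S_def in simp)
  then have hs: "(Fmap d z has_sum 1) UNIV" using Spos S_def F by simp
  have nn: "0 \<le> Fmap d z i" for i using Spos unfolding F S_def by (simp add: A s0)
  have sym: "Fmap d z (-i) = Fmap d z i" for i
  proof -
    have 1: "z (- i - 1) = z (i + 1)" using B(5)[of "i+1"] by (simp add: minus_add)
    have 2: "z (- i + 1) = z (i - 1)" using B(5)[of "i-1"] by simp
    show ?thesis unfolding F A s_def using 1 2 B(5)[of i] by (simp add: algebra_simps)
  qed
  have Fnz: "Fmap d z i \<noteq> 0 \<longleftrightarrow> (z (i - 1) \<noteq> 0 \<or> z i \<noteq> 0 \<or> z (i + 1) \<noteq> 0)" for i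
  proof -
    have "Fmap d z i \<noteq> 0 \<longleftrightarrow> s i \<noteq> 0" using Spos assms(2) unfolding F S_def A by simp
    also have "\<dots> \<longleftrightarrow> (z (i - 1) \<noteq> 0 \<or> z i \<noteq> 0 \<or> z (i + 1) \<noteq> 0)"
      unfolding s_def using B(3)[of "i-1"] B(3)[of i] B(3)[of "i+1"] by linarith
    finally show ?thesis .
  qed
  have iv: "Fmap d z j \<noteq> 0" if H: "i \<le> j" "j \<le> k" "Fmap d z i \<noteq> 0" "Fmap d z k \<noteq> 0" for i j k
  proof -
    obtain i' where i': "z i' \<noteq> 0" "i - 1 \<le> i'" "i' \<le> i + 1" proof -
      have "z (i - 1) \<noteq> 0 \<or> z i \<noteq> 0 \<or> z (i + 1) \<noteq> 0" using H(3) Fnz[of i] by simp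
      then show ?thesis using that[of "i-1"] that[of i] that[of "i+1"] by force
    qed
    obtain k' where k': "z k' \<noteq> 0" "k - 1 \<le> k'" "k' \<le> k + 1" proof -
      have "z (k - 1) \<noteq> 0 \<or> z k \<noteq> 0 \<or> z (k + 1) \<noteq> 0" using H(4) Fnz[of k] by simp
      then show ?thesis using that[of "k-1"] that[of k] that[of "k+1"] by force
    qed
    show ?thesis
    proof (cases "j < i'")
      case True
      then have "j + 1 = i'" using H i' by linarith
      then show ?thesis using Fnz i' by auto
    next
      case False
      show ?thesis
      proof (cases "k' < j")
        case True
        then have "j - 1 = k'" using H k' by linarith
        then show ?thesis using Fnz k' by auto
      next
        case False
        then have "z j \<noteq> 0" using \<open>\<not> j < i'\<close> B(6) i' k' by (meson not_le)
        then show ?thesis using Fnz by auto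
      qed
    qed
  qed
  show "Fmap d z \<in> symdist" unfolding symdist_def using nn hs sym iv by blast
qed

lemma ineq_tail:
  fixes p q r b c :: real
  assumes "0 \<le> p" "p \<le> b" "0 \<le> q" "q \<le> c" "0 \<le> r" "r \<le> c" "c \<le> b" "b \<le> 1"
  shows "p * (1 + q + q * r) / (1 + p + p * q) \<le> b * (1 + c + c^2) / (1 + b + b * c)"
proof -
  have c0: "0 \<le> c" using assms by linarith
  have d1: "0 < 1 + p + p * q" using assms by (simp add: add_pos_nonneg)
  have "p * (1 + q + q * r) \<le> p * (1 + q + q * c)"
    using assms by (intro mult_left_mono) (auto intro: mult_left_mono)
  then have s1: "p * (1 + q + q * r) / (1 + p + p * q) \<le> p * (1 + q + q * c) / (1 + p + p * q)"
    using d1 by (simp add: divide_right_mono)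
  have d2: "0 < 1 + p + p * c" using assms c0 by (simp add: add_pos_nonneg)
  have id: "(1 + c + c^2) * (1 + p + p * q) - (1 + q + q * c) * (1 + p + p * c) = (c - q) * (1 + c + p * c)"
    by (simp add: algebra_simps power2_eq_square)
  have "(c - q) * (1 + c + p * c) \<ge> 0" using assms c0 by simp
  then have "(1 + q + q * c) * (1 + p + p * c) \<le> (1 + c + c^2) * (1 + p + p * q)" using id by linarith
  then have "p * ((1 + q + q * c) * (1 + p + p * c)) \<le> p * ((1 + c + c^2) * (1 + p + p * q))"
    using assms by (intro mult_left_mono) auto
  then have s2: "p * (1 + q + q * c) / (1 + p + p * q) \<le> p * (1 + c + c^2) / (1 + p + p * c)"
    using d1 d2 by (simp add: divide_simps algebra_simps)
  have d3: "0 < 1 + b + b * c" using assms c0 by (simp add: add_pos_nonneg)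
  have "p * (1 + b + b * c) \<le> b * (1 + p + p * c)" using assms c0
    by (simp add: algebra_simps mult_right_mono)
  then have "p * (1 + c + c^2) * (1 + b + b * c) \<le> b * (1 + c + c^2) * (1 + p + p * c)"
    using mult_right_mono[of "p * (1 + b + b * c)" "b * (1 + p + p * c)" "1 + c + c^2"] c0
    by (simp add: algebra_simps)
  then have s3: "p * (1 + c + c^2) / (1 + p + p * c) \<le> b * (1 + c + c^2) / (1 + b + b * c)"
    using d2 d3 by (simp add: divide_simps)
  show ?thesis using s1 s2 s3 by linarith
qed

lemma ineq_first:
  fixes x y a b c :: real
  assumes "0 \<le> a" "a \<le> x" "x \<le> b" "0 \<le> y" "y \<le> c" "c \<le> 1"
  shows "(1 + b) / (1 + 2 * b) \<le> (1 + x + x * y) / (1 + 2 * x)"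
        "(1 + x + x * y) / (1 + 2 * x) \<le> (1 + a + a * c) / (1 + 2 * a)"
proof -
  have p: "0 < 1 + 2 * x" "0 < 1 + 2 * b" "0 < 1 + 2 * a" using assms by linarith+
  have "(1 + b) * (1 + 2 * x) \<le> (1 + x + x * y) * (1 + 2 * b)"
  proof -
    have "(1 + x + x * y) * (1 + 2 * b) - (1 + b) * (1 + 2 * x) = (b - x) + x * y + 2 * b * x * y"
      by (simp add: algebra_simps)
    moreover have "0 \<le> x * y" "0 \<le> b * x * y" using assms by simp_all
    ultimately show ?thesis using assms by linarith
  qed
  then show "(1 + b) / (1 + 2 * b) \<le> (1 + x + x * y) / (1 + 2 * x)" using p by (simp add: divide_simps)
  have "(1 + x + x * y) * (1 + 2 * a) \<le> (1 + a + a * c) * (1 + 2 * x)"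
  proof -
    have "x * y \<le> x * c" using assms by (simp add: mult_left_mono)
    then have "(1 + x + x * y) * (1 + 2 * a) \<le> (1 + x + x * c) * (1 + 2 * a)" using p by simp
    moreover have "(1 + a + a * c) * (1 + 2 * x) - (1 + x + x * c) * (1 + 2 * a) = (x - a) * (1 - c)"
      by (simp add: algebra_simps)
    moreover have "(x - a) * (1 - c) \<ge> 0" using assms by simp
    ultimately show ?thesis by linarith
  qed
  then show "(1 + x + x * y) / (1 + 2 * x) \<le> (1 + a + a * c) / (1 + 2 * a)" using p by (simp add: divide_simps)
qed

lemma ineq_c:
  fixes a b c :: real
  assumes "0 \<le> a" "a \<le> b" "0 \<le> c" "c \<le> b" "b \<le> 1"
  shows "b * (1 + c + c^2) / (1 + b + b * c) \<le> (1 + a + a * c) / (1 + 2 * a)"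
proof -
  have p: "0 < 1 + b + b * c" "0 < 1 + 2 * b" "0 < 1 + 2 * a" using assms by (simp_all add: add_pos_nonneg)
  have "b * (1 + c + c^2) * (1 + 2 * b) \<le> (1 + b + b * c) * (1 + b + b * c)"
  proof -
    have e: "(1 + b + b * c) * (1 + b + b * c) - b * (1 + c + c^2) * (1 + 2 * b) = (1 - b^2) + b * (1 + c - c^2 - b * c^2)"
      by (simp add: algebra_simps power2_eq_square)
    have "c^2 \<le> c" using assms by (simp add: power2_eq_square mult_left_le_one_le)
    moreover have "b * c^2 \<le> c^2" using assms by (simp add: mult_left_le_one_le)
    ultimately have "0 \<le> 1 + c - c^2 - b * c^2" using assms by linarith
    moreover have "b^2 \<le> 1" using assms by (simp add: power_le_one)
    ultimately show ?thesis using e assms by (smt (verit) mult_nonneg_nonneg)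
  qed
  then have s1: "b * (1 + c + c^2) / (1 + b + b * c) \<le> (1 + b + b * c) / (1 + 2 * b)"
    using p by (simp add: divide_simps)
  have "(1 + b + b * c) * (1 + 2 * a) \<le> (1 + a + a * c) * (1 + 2 * b)"
  proof -
    have "(1 + a + a * c) * (1 + 2 * b) - (1 + b + b * c) * (1 + 2 * a) = (b - a) * (1 - c)"
      by (simp add: algebra_simps)
    moreover have "(b - a) * (1 - c) \<ge> 0" using assms by simp
    ultimately show ?thesis by linarith
  qed
  then have s2: "(1 + b + b * c) / (1 + 2 * b) \<le> (1 + a + a * c) / (1 + 2 * a)"
    using p by (simp add: divide_simps)
  show ?thesis using s1 s2 by linarith
qed

lemma rec_step:
  assumes "z \<in> symdist"
  shows "z (int m + 1) = z (int m) * Rmap z (Suc m)"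
proof -
  note B = symdist_basic[OF assms]
  have R: "Rmap z (Suc m) = (if z (int m) \<noteq> 0 then z (int m + 1) / z (int m) else 0)"
    unfolding Rmap_def by (simp add: add.commute)
  show ?thesis
  proof (cases "z (int m) = 0")
    case True
    have "z (int m + 1) = 0"
    proof (rule ccontr)
      assume h: "z (int m + 1) \<noteq> 0"
      then have "z (- (int m + 1)) \<noteq> 0" using B(5)[of "int m + 1"] by metis
      then have "z (int m) \<noteq> 0" using B(6)[of "- (int m + 1)" "int m" "int m + 1"] h by simp
      then show False using True by simp
    qed
    then show ?thesis using True by simp
  qed (simp add: R)
qed

lemma Rmap_F:
  assumes "z \<in> symdist" "d \<ge> 1" "n \<ge> 1"
  shows "Rmap (Fmap d z) n = (if Amap d z (int n - 1) \<noteq> 0 then Amap d z (int n) / Amap d z (int n - 1) else 0)"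
proof -
  have S: "infsum (Amap d z) UNIV > 0" using F_symdist[OF assms(1,2)] by simp
  show ?thesis unfolding Rmap_def Fmap_def using assms(3) S by auto
qed

lemma Rmap_nonneg:
  assumes "z \<in> symdist" shows "0 \<le> Rmap z n"
  using symdist_basic(3)[OF assms] unfolding Rmap_def by simp

theorem lemma2p2:
  fixes d :: nat and a b c :: real
  assumes "d \<ge> 2" and "(a, b, c) \<in> Iset"
  shows "case phi d a b c of (a', b', c') \<Rightarrow>
           (a', b', c') \<in> Iset \<and> psi d ` Sset a b c \<subseteq> Sset a' b' c'"
proof -
  have d1: "d \<ge> 1" using assms(1) by simp
  have ab: "0 \<le> a" "a \<le> 1" "0 \<le> b" "b \<le> 1" "0 \<le> c" "c \<le> 1" "a \<le> b" "c \<le> b"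
    using assms(2) unfolding Iset_def by auto
  define a' where "a' = ((1 + b) / (1 + 2 * b)) ^ d"
  define b' where "b' = ((1 + a + a * c) / (1 + 2 * a)) ^ d"
  define c' where "c' = b ^ d * ((1 + c + c ^ 2) / (1 + b + b * c)) ^ d"
  have ph: "phi d a b c = (a', b', c')" unfolding phi_def a'_def b'_def c'_def by simp
  have c'eq: "c' = (b * (1 + c + c^2) / (1 + b + b * c)) ^ d"
    unfolding c'_def by (simp add: power_mult_distrib power_divide)
  have q1: "(1 + b) / (1 + 2 * b) \<le> (1 + a + a * c) / (1 + 2 * a)"
    using ineq_first[of a a b 0 c] ineq_first(2)[of a a b c c] ab by simp
  have q0: "0 \<le> (1 + b) / (1 + 2 * b)" using ab by simp
  have qb1: "(1 + a + a * c) / (1 + 2 * a) \<le> 1"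
    using ab mult_left_le[of c a] by (simp add: divide_simps)
  have qc0: "0 \<le> b * (1 + c + c^2) / (1 + b + b * c)" using ab by simp
  have qc: "b * (1 + c + c^2) / (1 + b + b * c) \<le> (1 + a + a * c) / (1 + 2 * a)"
    using ineq_c ab by simp
  have "a' \<le> b'" unfolding a'_def b'_def by (intro power_mono q1 q0)
  moreover have "c' \<le> b'" unfolding c'eq b'_def by (intro power_mono qc qc0)
  moreover have "0 \<le> a'" unfolding a'_def using q0 by simp
  moreover have "0 \<le> c'" unfolding c'eq using qc0 by simp
  moreover have "b' \<le> 1" unfolding b'_def using qb1 q0 q1 by (simp add: power_le_one)
  ultimately have I: "(a', b', c') \<in> Iset" unfolding Iset_def by auto
  have sub: "psi d x \<in> Sset a' b' c'" if xS: "x \<in> Sset a b c" for x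
  proof -
    have xR: "x \<in> Rset" and x1: "a \<le> x 1" "x 1 \<le> b" and xn: "\<And>n. n \<ge> 2 \<Longrightarrow> 0 \<le> x n \<and> x n \<le> c"
      using xS unfolding Sset_def by auto
    define z where "z = inv_into symdist Rmap x"
    have zS: "z \<in> symdist" unfolding z_def using xR unfolding Rset_def by (rule inv_into_into)
    have zx: "Rmap z = x" unfolding z_def using xR unfolding Rset_def by (rule f_inv_into_f)
    note B = symdist_basic[OF zS]
    have rec: "z (int m + 1) = z (int m) * x (Suc m)" for m using rec_step[OF zS, of m] zx by simp
    have x0: "0 \<le> x n" for n using Rmap_nonneg[OF zS, of n] zx by simp
    have xb: "x n \<le> b" if "n \<ge> 1" for n
      using that x1 xn[of n] ab by (cases "n = 1") auto
    define y where "y = psi d x"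
    have y: "y = Rmap (Fmap d z)" unfolding y_def psi_def z_def ..
    have yR: "y \<in> Rset" unfolding y Rset_def using F_symdist(1)[OF zS d1] by blast
    let ?A = "Amap d z"
    have y1: "y 1 = ((1 + x 1 + x 1 * x 2) / (1 + 2 * x 1)) ^ d"
    proof -
      have z1: "z 1 = z 0 * x 1" using rec[of 0] by simp
      have z2: "z 2 = z 0 * x 1 * x 2" using rec[of 1] z1 by (simp add: numeral_2_eq_2)
      have zm: "z (-1) = z 1" using B(5)[of 1] by simp
      have A0: "?A 0 = (z 0 * (1 + 2 * x 1)) ^ d" unfolding Amap_def using zm z1
        by (simp add: algebra_simps)
      have A1: "?A 1 = (z 0 * (1 + x 1 + x 1 * x 2)) ^ d" unfolding Amap_def using z1 z2
        by (simp add: algebra_simps)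
      have pos: "z 0 * (1 + 2 * x 1) > 0" using B(2) x0[of 1] by simp
      have "y 1 = ?A 1 / ?A 0" unfolding y using Rmap_F[OF zS d1, of 1] A0 pos by simp
      also have "\<dots> = ((z 0 * (1 + x 1 + x 1 * x 2)) / (z 0 * (1 + 2 * x 1))) ^ d"
        unfolding A0 A1 by (rule power_divide[symmetric])
      also have "\<dots> = ((1 + x 1 + x 1 * x 2) / (1 + 2 * x 1)) ^ d"
        using B(2) mult_divide_mult_cancel_left[of "z 0" "1 + x 1 + x 1 * x 2" "1 + 2 * x 1"] by simp
      finally show ?thesis .
    qed
    have "a' \<le> y 1" unfolding y1 a'_def
      using ineq_first(1)[of a "x 1" b "x 2" c] x1 ab x0 xn[of 2] q0 by (intro power_mono) auto
    moreover have "y 1 \<le> b'" unfolding y1 b'_def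
      using ineq_first(2)[of a "x 1" b "x 2" c] x1 ab x0 xn[of 2] by (intro power_mono) auto
    moreover have "0 \<le> y n \<and> y n \<le> c'" if n2: "n \<ge> 2" for n
    proof -
      obtain m where m: "n = m + 2" using n2 by (metis add.commute le_Suc_ex)
      define w where "w = z (int m)"
      define p where "p = x (m + 1)"
      define q where "q = x (m + 2)"
      define r where "r = x (m + 3)"
      have za: "z (int m + 1) = w * p" unfolding w_def p_def using rec[of m] by simp
      have zb: "z (int m + 2) = w * p * q" unfolding q_def using rec[of "m+1"] za
        by (simp add: ac_simps)
      have zc: "z (int m + 3) = w * p * q * r" unfolding r_def using rec[of "m+2"] zb
        by (simp add: ac_simps numeral_3_eq_3)
      have e1: "int n - 1 = int m + 1" "int n = int m + 2" using m by simp_all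
      have "?A (int n - 1) = (z (int m) + z (int m + 1) + z (int m + 2)) ^ d"
        unfolding e1 Amap_def by (simp add: ac_simps)
      then have An1: "?A (int n - 1) = (w * (1 + p + p * q)) ^ d"
        unfolding za zb w_def[symmetric] by (simp add: algebra_simps)
      have "?A (int n) = (z (int m + 1) + z (int m + 2) + z (int m + 3)) ^ d"
        unfolding e1 Amap_def by (simp add: ac_simps)
      then have An: "?A (int n) = (w * p * (1 + q + q * r)) ^ d"
        unfolding za zb zc by (simp add: algebra_simps)
      have pq: "0 \<le> p" "p \<le> b" "0 \<le> q" "q \<le> c" "0 \<le> r" "r \<le> c"
        unfolding p_def q_def r_def using x0 xb[of "m+1"] xn[of "m+2"] xn[of "m+3"] by auto
      have w0: "0 \<le> w" unfolding w_def using B(3) by simp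
      have yn: "y n = (if ?A (int n - 1) \<noteq> 0 then ?A (int n) / ?A (int n - 1) else 0)"
        unfolding y using Rmap_F[OF zS d1, of n] n2 by simp
      have d0: "0 < 1 + p + p * q" using pq by (simp add: add_pos_nonneg)
      have ineq: "p * (1 + q + q * r) / (1 + p + p * q) \<le> b * (1 + c + c^2) / (1 + b + b * c)"
        using ineq_tail pq ab by simp
      have f0: "0 \<le> p * (1 + q + q * r) / (1 + p + p * q)" using pq d0 by simp
      show ?thesis
      proof (cases "w = 0")
        case True
        then show ?thesis using yn An1 d1 \<open>0 \<le> c'\<close> by (simp add: zero_power)
      next
        case False
        then have wp: "w > 0" using w0 by simp
        have "y n = ((w * p * (1 + q + q * r)) / (w * (1 + p + p * q))) ^ d"
          using yn An1 An wp d0 by (simp only: power_divide) simp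
        also have "\<dots> = (p * (1 + q + q * r) / (1 + p + p * q)) ^ d"
          using wp mult_divide_mult_cancel_left[of w "p * (1 + q + q * r)" "1 + p + p * q"]
          by (simp add: mult.assoc)
        finally have "y n = (p * (1 + q + q * r) / (1 + p + p * q)) ^ d" .
        then show ?thesis unfolding c'eq using ineq f0 by (simp add: power_mono)
      qed
    qed
    ultimately show ?thesis unfolding y_def[symmetric] Sset_def using yR by auto
  qed
  show ?thesis unfolding ph using I sub by auto
qed

end
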